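(* For every integer $m\geq 1$, the graph $\mathcal{G}^1_{6m+1}$ is transmission irregular.
   Context: Let $G_1$ be the graph with vertices $a,b,c,d,e$ and edges $ab,ac,ad,bc,cd,de$. For an integer $n\ge 2$, $\mathcal{G}^1_n$ is obtained from $G_1$ by adding a new path from $a$ to $b$ with $n$ new internal vertices (i.e. a path $a,x_1,\dots,x_n,b$ of length $n+1$, where the $x_i$ are new vertices). The transmission of a vertex $u$ in a connected graph $G$ is $Tr_G(u)=\sum_{v}d_G(u,v)$; a graph is transmission irregular if no two of its vertices have equal transmission. *)

theory Defs
  imports Main
begin

definition is_walk :: "'a set \<Rightarrow> ('a \<Rightarrow> 'a \<Rightarrow> bool) \<Rightarrow> 'a list \<Rightarrow> bool" where
  "is_walk V Ed p \<longleftrightarrow> p \<noteq> [] \<and> set p \<subseteq> V \<and>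
     (\<forall>i. i + 1 < length p \<longrightarrow> Ed (p ! i) (p ! (i + 1)))"

definition gdist :: "'a set \<Rightarrow> ('a \<Rightarrow> 'a \<Rightarrow> bool) \<Rightarrow> 'a \<Rightarrow> 'a \<Rightarrow> nat" where
  "gdist V Ed u v = (LEAST k. \<exists>p. is_walk V Ed p \<and> hd p = u \<and> last p = v \<and> length p = k + 1)"

definition transmission :: "'a set \<Rightarrow> ('a \<Rightarrow> 'a \<Rightarrow> bool) \<Rightarrow> 'a \<Rightarrow> nat" where
  "transmission V Ed u = (\<Sum>v\<in>V. gdist V Ed u v)"

definition transmission_irregular :: "'a set \<Rightarrow> ('a \<Rightarrow> 'a \<Rightarrow> bool) \<Rightarrow> bool" where
  "transmission_irregular V Ed \<longleftrightarrow> inj_on (transmission V Ed) V"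

datatype gvert = Va | Vb | Vc | Vd | Ve | X nat

definition G1n_verts :: "nat \<Rightarrow> gvert set" where
  "G1n_verts n = {Va, Vb, Vc, Vd, Ve} \<union> X ` {1..n}"

definition G1n_edge0 :: "nat \<Rightarrow> gvert \<Rightarrow> gvert \<Rightarrow> bool" where
  "G1n_edge0 n u v \<longleftrightarrow>
     (u, v) \<in> {(Va, Vb), (Va, Vc), (Va, Vd), (Vb, Vc), (Vc, Vd), (Vd, Ve), (Va, X 1), (X n, Vb)}
     \<or> (\<exists>i. 1 \<le> i \<and> i < n \<and> u = X i \<and> v = X (i + 1))"

definition G1n_adj :: "nat \<Rightarrow> gvert \<Rightarrow> gvert \<Rightarrow> bool" where
  "G1n_adj n u v \<longleftrightarrow> G1n_edge0 n u v \<or> G1n_edge0 n v u"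

end

theory Submission
  imports Defs
begin


lemma walk_lower:
  assumes w: "is_walk V Ed p" and hd: "hd p = u" and h0: "h u = 0"
    and lip: "\<And>x y. x \<in> V \<Longrightarrow> y \<in> V \<Longrightarrow> Ed x y \<Longrightarrow> h y \<le> h x + 1"
  shows "h (last p) \<le> length p - 1"
proof -
  have ne: "p \<noteq> []" and sub: "set p \<subseteq> V" and st: "\<And>i. i + 1 < length p \<Longrightarrow> Ed (p ! i) (p ! (i + 1))"
    using w unfolding is_walk_def by auto
  have "\<forall>i. i < length p \<longrightarrow> h (p ! i) \<le> i"
  proof
    fix i show "i < length p \<longrightarrow> h (p ! i) \<le> i"
    proof (induction i)
      case 0 then show ?case using ne hd h0 by (simp add: hd_conv_nth)
    next
      case (Suc i)
      show ?case
      proof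
        assume "Suc i < length p"
        then have "h (p ! (i+1)) \<le> h (p ! i) + 1"
          using lip[OF _ _ st[of i]] sub nth_mem by (metis Suc_eq_plus1 Suc_lessD subsetD)
        then show "h (p ! Suc i) \<le> Suc i" using Suc \<open>Suc i < length p\<close> by simp
      qed
    qed
  qed
  then show ?thesis using ne by (simp add: last_conv_nth)
qed

lemma walk_upper:
  assumes u: "u \<in> V" and h0: "h u = 0"
    and pred: "\<And>v. v \<in> V \<Longrightarrow> v \<noteq> u \<Longrightarrow> \<exists>w\<in>V. Ed w v \<and> h w + 1 = h v"
  shows "v \<in> V \<Longrightarrow> \<exists>p. is_walk V Ed p \<and> hd p = u \<and> last p = v \<and> length p = h v + 1"
proof (induction "h v" arbitrary: v)
  case 0
  then have "v = u" using pred by fastforce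
  then show ?case using u h0 by (intro exI[of _ "[u]"]) (auto simp: is_walk_def)
next
  case (Suc k)
  then have "v \<noteq> u" using h0 by auto
  then obtain w where w: "w \<in> V" "Ed w v" "h w + 1 = h v" using pred Suc.prems by blast
  then obtain p where p: "is_walk V Ed p" "hd p = u" "last p = w" "length p = h w + 1"
    using Suc by (metis add_right_cancel Suc_eq_plus1)
  have "is_walk V Ed (p @ [v])"
    unfolding is_walk_def
  proof (intro conjI allI impI)
    show "set (p @ [v]) \<subseteq> V" using p(1) Suc.prems by (auto simp: is_walk_def)
    fix i assume i: "i + 1 < length (p @ [v])"
    show "Ed ((p @ [v]) ! i) ((p @ [v]) ! (i + 1))"
    proof (cases "i + 1 < length p")
      case True then show ?thesis using p(1) by (simp add: is_walk_def nth_append)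
    next
      case False
      then have "i = length p - 1" using i by simp
      moreover have "p \<noteq> []" using p(1) by (simp add: is_walk_def)
      ultimately show ?thesis using w(2) p(3) by (simp add: nth_append last_conv_nth)
    qed
  qed simp
  moreover have "p \<noteq> []" using p(1) by (simp add: is_walk_def)
  ultimately show ?case using p w by (intro exI[of _ "p @ [v]"]) auto
qed

lemma gdist_eq:
  assumes u: "u \<in> V" and v: "v \<in> V" and h0: "h u = 0"
    and lip: "\<And>x y. x \<in> V \<Longrightarrow> y \<in> V \<Longrightarrow> Ed x y \<Longrightarrow> h y \<le> h x + 1"
    and pred: "\<And>v. v \<in> V \<Longrightarrow> v \<noteq> u \<Longrightarrow> \<exists>w\<in>V. Ed w v \<and> h w + 1 = h v"
  shows "gdist V Ed u v = h v"
  unfolding gdist_def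
proof (rule Least_equality)
  show "\<exists>p. is_walk V Ed p \<and> hd p = u \<and> last p = v \<and> length p = h v + 1"
    using walk_upper[OF u h0 pred v] by blast
next
  fix k assume "\<exists>p. is_walk V Ed p \<and> hd p = u \<and> last p = v \<and> length p = k + 1"
  then obtain p where "is_walk V Ed p" "hd p = u" "last p = v" "length p = k + 1" by blast
  then show "h v \<le> k" using walk_lower[of V Ed p u h] h0 lip by fastforce
qed




definition cd :: "nat \<Rightarrow> nat \<Rightarrow> nat \<Rightarrow> nat" where
  "cd L p q = min (p - q + (q - p)) (L - (p - q + (q - p)))"

definition vp :: "nat \<Rightarrow> nat \<Rightarrow> gvert" where
  "vp n q = (if q = 0 then Va else if q = n + 1 then Vb else X q)"

fun pos :: "nat \<Rightarrow> gvert \<Rightarrow> nat" where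
  "pos n Va = 0" | "pos n Vb = n + 1" | "pos n (X i) = i" | "pos n _ = 0"

definition cadj :: "nat \<Rightarrow> nat \<Rightarrow> nat \<Rightarrow> bool" where
  "cadj L q q' \<longleftrightarrow> q' = q + 1 \<or> q = q' + 1 \<or> (q = 0 \<and> q' = L - 1) \<or> (q = L - 1 \<and> q' = 0)"

lemma pos_vp[simp]: "q < n + 2 \<Longrightarrow> pos n (vp n q) = q"
  by (simp add: vp_def)

lemma vp_inj: "inj_on (vp n) {..<n+2}"
  by (rule inj_onI) (metis lessThan_iff pos_vp)

lemma verts_eq: "G1n_verts n = {Vc, Vd, Ve} \<union> vp n ` {..<n+2}"
proof -
  have "vp n ` {..<n+2} = {Va, Vb} \<union> X ` {1..n}"
  proof
    show "vp n ` {..<n+2} \<subseteq> {Va, Vb} \<union> X ` {1..n}" by (auto simp: vp_def)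
  next
    show "{Va, Vb} \<union> X ` {1..n} \<subseteq> vp n ` {..<n+2}"
    proof
      fix v assume "v \<in> {Va, Vb} \<union> X ` {1..n}"
      then consider "v = Va" | "v = Vb" | i where "i \<in> {1..n}" "v = X i" by auto
      then show "v \<in> vp n ` {..<n+2}"
      proof cases
        case 1 then show ?thesis by (intro image_eqI[of _ _ 0]) (auto simp: vp_def)
      next
        case 2 then show ?thesis by (intro image_eqI[of _ _ "n+1"]) (auto simp: vp_def)
      next
        case 3 then show ?thesis by (intro image_eqI[of _ _ i]) (auto simp: vp_def)
      qed
    qed
  qed
  then show ?thesis unfolding G1n_verts_def by auto
qed

lemma vp_neq[simp]: "vp n q \<noteq> Vc" "vp n q \<noteq> Vd" "vp n q \<noteq> Ve"
  by (auto simp: vp_def)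

lemma cyc_adj:
  assumes "n \<ge> 1" "q < n + 2" "q' < n + 2" "cadj (n+2) q q'"
  shows "G1n_adj n (vp n q) (vp n q')"
  using assms unfolding cadj_def G1n_adj_def G1n_edge0_def vp_def
  by (auto; fastforce)

lemma edge0_cases:
  assumes n: "n \<ge> 1" and a: "G1n_edge0 n x y"
  shows "(x, y) \<in> {(Va,Vc),(Va,Vd),(Vb,Vc),(Vc,Vd),(Vd,Ve)} \<or>
    (\<exists>q<n+1. x = vp n q \<and> y = vp n (q+1)) \<or> (x = Va \<and> y = Vb)"
proof -
  have e1: "vp n 0 = Va" "vp n (n+1) = Vb" by (auto simp: vp_def)
  have e2: "\<And>i. 1 \<le> i \<Longrightarrow> i \<le> n \<Longrightarrow> vp n i = X i" by (auto simp: vp_def)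
  have "vp n 1 = X 1" using e2 n by auto
  show ?thesis using a unfolding G1n_edge0_def
  proof (elim disjE exE conjE)
    assume "(x, y) \<in> {(Va, Vb), (Va, Vc), (Va, Vd), (Vb, Vc), (Vc, Vd), (Vd, Ve), (Va, X 1), (X n, Vb)}"
    then consider "(x, y) \<in> {(Va,Vc),(Va,Vd),(Vb,Vc),(Vc,Vd),(Vd,Ve)}" | "x = Va \<and> y = Vb"
      | "x = Va \<and> y = X 1" | "x = X n \<and> y = Vb" by auto
    then show ?thesis
    proof cases
      case 3 then show ?thesis using e1 \<open>vp n 1 = X 1\<close> n by (intro disjI2 disjI1 exI[of _ 0]) auto
    next
      case 4 then show ?thesis using e1 e2[of n] n by (intro disjI2 disjI1 exI[of _ n]) auto
    qed auto
  next
    fix i assume "1 \<le> i" "i < n" "x = X i" "y = X (i + 1)"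
    then show ?thesis using e2[of i] e2[of "i+1"] by (intro disjI2 disjI1 exI[of _ i]) auto
  qed
qed

lemma adj_cases:
  assumes n: "n \<ge> 1" and a: "G1n_adj n x y"
  shows "(\<exists>q<n+2. \<exists>q'<n+2. x = vp n q \<and> y = vp n q' \<and> cadj (n+2) q q') \<or>
    (x, y) \<in> {(Va,Vc),(Vc,Va),(Va,Vd),(Vd,Va),(Vb,Vc),(Vc,Vb),(Vc,Vd),(Vd,Vc),(Vd,Ve),(Ve,Vd)}"
proof -
  have e1: "vp n 0 = Va" "vp n (n+1) = Vb" by (auto simp: vp_def)
  have c1: "cadj (n+2) 0 (n+1)" "cadj (n+2) (n+1) 0" by (auto simp: cadj_def)
  show ?thesis using a unfolding G1n_adj_def
  proof (elim disjE)
    assume "G1n_edge0 n x y"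
    from edge0_cases[OF n this] show ?thesis
    proof (elim disjE exE conjE)
      fix q assume "q < n+1" "x = vp n q" "y = vp n (q+1)"
      then have "q < n+2 \<and> q+1 < n+2 \<and> x = vp n q \<and> y = vp n (q+1) \<and> cadj (n+2) q (q+1)" by (auto simp: cadj_def)
      then show ?thesis by blast
    next
      assume "x = Va" "y = Vb" then have "0 < n+2 \<and> n+1 < n+2 \<and> x = vp n 0 \<and> y = vp n (n+1) \<and> cadj (n+2) 0 (n+1)" using e1 c1 by auto
      then show ?thesis by blast
    qed auto
  next
    assume "G1n_edge0 n y x"
    from edge0_cases[OF n this] show ?thesis
    proof (elim disjE exE conjE)
      fix q assume "q < n+1" "y = vp n q" "x = vp n (q+1)"
      then have "q+1 < n+2 \<and> q < n+2 \<and> x = vp n (q+1) \<and> y = vp n q \<and> cadj (n+2) (q+1) q" by (auto simp: cadj_def)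
      then show ?thesis by blast
    next
      assume "y = Va" "x = Vb" then have "n+1 < n+2 \<and> 0 < n+2 \<and> x = vp n (n+1) \<and> y = vp n 0 \<and> cadj (n+2) (n+1) 0" using e1 c1 by auto
      then show ?thesis by blast
    qed auto
  qed
qed




lemma cd_le: "q \<le> p \<Longrightarrow> cd L p q = min (p - q) (L - (p - q))"
  unfolding cd_def by simp
lemma cd_ge: "p \<le> q \<Longrightarrow> cd L p q = min (q - p) (L - (q - p))"
  unfolding cd_def by simp

lemma t1: "p < L \<Longrightarrow> q+1 < L \<Longrightarrow> cd L p (q+1) \<le> cd L p q + 1"
  by (cases "q < p") (simp_all add: cd_le cd_ge min_def; arith)+
lemma t2: "p < L \<Longrightarrow> q+1 < L \<Longrightarrow> cd L p q \<le> cd L p (q+1) + 1"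
  by (cases "q < p") (simp_all add: cd_le cd_ge min_def; arith)+
lemma t3: "p < L \<Longrightarrow> cd L p (L-1) \<le> cd L p 0 + 1"
  by (cases "L - 1 \<le> p") (simp_all add: cd_le cd_ge min_def; arith)+
lemma t4: "p < L \<Longrightarrow> cd L p 0 \<le> cd L p (L-1) + 1"
  by (cases "L - 1 \<le> p") (simp_all add: cd_le cd_ge min_def; arith)+

lemma cd_lip:
  assumes "p < L" "q < L" "q' < L" "cadj L q q'"
  shows "cd L p q' \<le> cd L p q + 1"
  using assms t1[of p L q] t2[of p L q'] t3[of p L] t4[of p L] unfolding cadj_def by auto

lemma p1: "p < L \<Longrightarrow> q < p \<Longrightarrow> 2*(p - q) \<le> L \<Longrightarrow> cd L p (q+1) + 1 = cd L p q"
  by (simp add: cd_le min_def; arith)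
lemma p2: "p < L \<Longrightarrow> q < p \<Longrightarrow> 2*(p - q) > L \<Longrightarrow> q \<ge> 1 \<Longrightarrow> cd L p (q-1) + 1 = cd L p q"
  by (simp add: cd_le min_def; arith)
lemma p3: "p < L \<Longrightarrow> 0 < p \<Longrightarrow> 2*p > L \<Longrightarrow> cd L p (L-1) + 1 = cd L p 0"
  by (simp add: cd_le cd_ge min_def; arith)
lemma p4: "p < L \<Longrightarrow> p < q \<Longrightarrow> q < L \<Longrightarrow> 2*(q-p) \<le> L \<Longrightarrow> cd L p (q-1) + 1 = cd L p q"
  by (simp add: cd_ge min_def; arith)
lemma p5: "p < L \<Longrightarrow> p < q \<Longrightarrow> q+1 < L \<Longrightarrow> 2*(q-p) > L \<Longrightarrow> cd L p (q+1) + 1 = cd L p q"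
  by (simp add: cd_ge min_def; arith)
lemma p6: "p < L \<Longrightarrow> p < L-1 \<Longrightarrow> 2*(L-1-p) > L \<Longrightarrow> cd L p 0 + 1 = cd L p (L-1)"
  by (simp add: cd_ge cd_le min_def; arith)

lemma cd_pred:
  assumes "p < L" "q < L" "q \<noteq> p"
  shows "\<exists>q'<L. cadj L q' q \<and> cd L p q' + 1 = cd L p q"
proof (cases "q < p")
  case True
  show ?thesis
  proof (cases "2*(p-q) \<le> L")
    case True
    then show ?thesis using p1[of p L q] \<open>q < p\<close> assms
      by (intro exI[of _ "q+1"]) (auto simp: cadj_def)
  next
    case False
    show ?thesis
    proof (cases "q \<ge> 1")
      case True
      then show ?thesis using p2[of p L q] \<open>q < p\<close> False assms
        by (intro exI[of _ "q-1"]) (auto simp: cadj_def)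
    next
      case F2: False
      then have "q = 0" by simp
      then show ?thesis using p3[of p L] \<open>q < p\<close> False assms
        by (intro exI[of _ "L-1"]) (auto simp: cadj_def)
    qed
  qed
next
  case False
  then have "p < q" using assms by simp
  show ?thesis
  proof (cases "2*(q-p) \<le> L")
    case True
    then show ?thesis using p4[of p L q] \<open>p < q\<close> assms
      by (intro exI[of _ "q-1"]) (auto simp: cadj_def)
  next
    case F1: False
    show ?thesis
    proof (cases "q + 1 < L")
      case True
      then show ?thesis using p5[of p L q] \<open>p < q\<close> F1 assms
        by (intro exI[of _ "q+1"]) (auto simp: cadj_def)
    next
      case False
      then have "q = L - 1" using assms by simp
      then show ?thesis using p6[of p L] \<open>p < q\<close> F1 assms
        by (intro exI[of _ 0]) (auto simp: cadj_def)
    qed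
  qed
qed

definition gC :: "nat \<Rightarrow> nat \<Rightarrow> nat" where
  "gC L q = min q (L - 1 - q)"

lemma gC_lip:
  assumes "q < L" "q' < L" "cadj L q q'"
  shows "gC L q' \<le> gC L q + 1"
  using assms unfolding gC_def cadj_def by (auto simp: min_def)

lemma gC_pred:
  assumes "0 < q" "q < L - 1"
  shows "\<exists>q'<L. cadj L q' q \<and> gC L q' + 1 = gC L q"
proof (cases "q \<le> L - 1 - q")
  case True
  then show ?thesis using assms by (intro exI[of _ "q-1"]) (auto simp: cadj_def gC_def min_def)
next
  case False
  then show ?thesis using assms by (intro exI[of _ "q+1"]) (auto simp: cadj_def gC_def min_def)
qed




definition hcyc :: "nat \<Rightarrow> nat \<Rightarrow> gvert \<Rightarrow> nat" where
  "hcyc n p v = (case v of Vc \<Rightarrow> 1 + min (cd (n+2) p 0) (cd (n+2) p (n+1))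
     | Vd \<Rightarrow> 1 + cd (n+2) p 0 | Ve \<Rightarrow> 2 + cd (n+2) p 0 | _ \<Rightarrow> cd (n+2) p (pos n v))"
definition hC :: "nat \<Rightarrow> gvert \<Rightarrow> nat" where
  "hC n v = (case v of Vc \<Rightarrow> 0 | Vd \<Rightarrow> 1 | Ve \<Rightarrow> 2 | _ \<Rightarrow> 1 + gC (n+2) (pos n v))"
definition hD :: "nat \<Rightarrow> gvert \<Rightarrow> nat" where
  "hD n v = (case v of Vc \<Rightarrow> 1 | Vd \<Rightarrow> 0 | Ve \<Rightarrow> 1 | _ \<Rightarrow> 1 + cd (n+2) 0 (pos n v))"
definition hE :: "nat \<Rightarrow> gvert \<Rightarrow> nat" where
  "hE n v = (case v of Vc \<Rightarrow> 2 | Vd \<Rightarrow> 1 | Ve \<Rightarrow> 0 | _ \<Rightarrow> 2 + cd (n+2) 0 (pos n v))"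

lemma hcyc_vp: "q < n + 2 \<Longrightarrow> hcyc n p (vp n q) = cd (n+2) p q"
  by (simp add: hcyc_def vp_def)
lemma hC_vp: "q < n + 2 \<Longrightarrow> hC n (vp n q) = 1 + gC (n+2) q"
  by (simp add: hC_def vp_def)
lemma hD_vp: "q < n + 2 \<Longrightarrow> hD n (vp n q) = 1 + cd (n+2) 0 q"
  by (simp add: hD_def vp_def)
lemma hE_vp: "q < n + 2 \<Longrightarrow> hE n (vp n q) = 2 + cd (n+2) 0 q"
  by (simp add: hE_def vp_def)

lemma lip_generic:
  assumes n: "n \<ge> 1" and hv: "\<And>q. q < n+2 \<Longrightarrow> (h :: gvert \<Rightarrow> nat) (vp n q) = c + g q"
    and gl: "\<And>q q'. q < n+2 \<Longrightarrow> q' < n+2 \<Longrightarrow> cadj (n+2) q q' \<Longrightarrow> g q' \<le> g q + 1"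
    and sp: "\<And>x y. (x, y) \<in> {(Va,Vc),(Vc,Va),(Va,Vd),(Vd,Va),(Vb,Vc),(Vc,Vb),(Vc,Vd),(Vd,Vc),(Vd,Ve),(Ve,Vd)}
       \<Longrightarrow> h y \<le> h x + 1"
    and a: "G1n_adj n x y"
  shows "h y \<le> h x + 1"
  using adj_cases[OF n a]
proof (elim disjE exE conjE)
  fix q q' assume "q < n+2" "q' < n+2" "x = vp n q" "y = vp n q'" "cadj (n+2) q q'"
  then show ?thesis using hv[of q] hv[of q'] gl[of q q'] by simp
qed (use sp in blast)

lemma pred_generic:
  assumes n: "n \<ge> 1" and hv: "\<And>q. q < n+2 \<Longrightarrow> (h :: gvert \<Rightarrow> nat) (vp n q) = c + g q"
    and q: "q < n+2" and ex: "\<exists>q'<n+2. cadj (n+2) q' q \<and> g q' + 1 = g q"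
  shows "\<exists>w\<in>G1n_verts n. G1n_adj n w (vp n q) \<and> h w + 1 = h (vp n q)"
proof -
  obtain q' where q': "q' < n+2" "cadj (n+2) q' q" "g q' + 1 = g q" using ex by blast
  have "vp n q' \<in> G1n_verts n" using q' verts_eq by auto
  moreover have "G1n_adj n (vp n q') (vp n q)" using cyc_adj[OF n q'(1) q q'(2)] .
  moreover have "h (vp n q') + 1 = h (vp n q)" using hv[of q] hv[of q'] q q' by simp
  ultimately show ?thesis by blast
qed

lemma V_cases:
  assumes "v \<in> G1n_verts n"
  obtains "v = Vc" | "v = Vd" | "v = Ve" | q where "q < n+2" "v = vp n q"
  using assms verts_eq by auto

lemma vp0: "vp n 0 = Va" and vpL: "vp n (n+1) = Vb"
  by (auto simp: vp_def)

lemma cadjs: "cadj (n+2) 0 (n+1)" "cadj (n+2) (n+1) 0"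
  by (auto simp: cadj_def)

lemma dist_cyc:
  assumes n: "n \<ge> 1" and p: "p < n+2" and v: "v \<in> G1n_verts n"
  shows "gdist (G1n_verts n) (G1n_adj n) (vp n p) v = hcyc n p v"
proof (rule gdist_eq[OF _ v])
  show "vp n p \<in> G1n_verts n" using p verts_eq by auto
  show "hcyc n p (vp n p) = 0" using p by (simp add: hcyc_vp cd_def)
  have l1: "cd (n+2) p (n+1) \<le> cd (n+2) p 0 + 1" "cd (n+2) p 0 \<le> cd (n+2) p (n+1) + 1"
    using cd_lip[OF p _ _ cadjs(1)] cd_lip[OF p _ _ cadjs(2)] by auto
  fix x y assume "x \<in> G1n_verts n" "y \<in> G1n_verts n" "G1n_adj n x y"
  show "hcyc n p y \<le> hcyc n p x + 1"
  proof (rule lip_generic[OF n _ _ _ \<open>G1n_adj n x y\<close>])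
    show "\<And>q. q < n+2 \<Longrightarrow> hcyc n p (vp n q) = 0 + cd (n+2) p q" by (simp add: hcyc_vp)
    show "\<And>q q'. q < n+2 \<Longrightarrow> q' < n+2 \<Longrightarrow> cadj (n+2) q q' \<Longrightarrow> cd (n+2) p q' \<le> cd (n+2) p q + 1"
      using cd_lip p by blast
    show "\<And>x y. (x, y) \<in> {(Va,Vc),(Vc,Va),(Va,Vd),(Vd,Va),(Vb,Vc),(Vc,Vb),(Vc,Vd),(Vd,Vc),(Vd,Ve),(Ve,Vd)}
       \<Longrightarrow> hcyc n p y \<le> hcyc n p x + 1"
      using l1 by (auto simp: hcyc_def)
  qed
next
  fix v assume v: "v \<in> G1n_verts n" "v \<noteq> vp n p"
  have l1: "cd (n+2) p (n+1) \<le> cd (n+2) p 0 + 1" "cd (n+2) p 0 \<le> cd (n+2) p (n+1) + 1"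
    using cd_lip[OF p _ _ cadjs(1)] cd_lip[OF p _ _ cadjs(2)] by auto
  have VaV: "Va \<in> G1n_verts n" "Vb \<in> G1n_verts n" "Vc \<in> G1n_verts n" "Vd \<in> G1n_verts n"
    by (auto simp: G1n_verts_def)
  have ad: "G1n_adj n Va Vc" "G1n_adj n Vb Vc" "G1n_adj n Va Vd" "G1n_adj n Vd Ve"
    by (auto simp: G1n_adj_def G1n_edge0_def)
  from v(1) show "\<exists>w\<in>G1n_verts n. G1n_adj n w v \<and> hcyc n p w + 1 = hcyc n p v"
  proof (cases rule: V_cases)
    case 1
    show ?thesis
    proof (cases "cd (n+2) p 0 \<le> cd (n+2) p (n+1)")
      case True
      then show ?thesis using 1 VaV ad by (intro bexI[of _ Va]) (auto simp: hcyc_def min_def)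
    next
      case False
      then show ?thesis using 1 VaV ad by (intro bexI[of _ Vb]) (auto simp: hcyc_def min_def)
    qed
  next
    case 2 then show ?thesis using VaV ad by (intro bexI[of _ Va]) (auto simp: hcyc_def)
  next
    case 3 then show ?thesis using VaV ad by (intro bexI[of _ Vd]) (auto simp: hcyc_def)
  next
    case (4 q)
    then have "q \<noteq> p" using v by auto
    show ?thesis unfolding \<open>v = vp n q\<close>
    proof (rule pred_generic[OF n _ \<open>q < n+2\<close>])
      show "\<And>q. q < n+2 \<Longrightarrow> hcyc n p (vp n q) = 0 + cd (n+2) p q" by (simp add: hcyc_vp)
      show "\<exists>q'<n+2. cadj (n+2) q' q \<and> cd (n+2) p q' + 1 = cd (n+2) p q"
        using cd_pred[OF p \<open>q < n+2\<close> \<open>q \<noteq> p\<close>] .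
    qed
  qed
qed


lemma basics:
  shows VaV: "Va \<in> G1n_verts n" "Vb \<in> G1n_verts n" "Vc \<in> G1n_verts n" "Vd \<in> G1n_verts n" "Ve \<in> G1n_verts n"
    and ad: "G1n_adj n Va Vc" "G1n_adj n Vb Vc" "G1n_adj n Va Vd" "G1n_adj n Vd Ve" "G1n_adj n Vc Vd"
      "G1n_adj n Vd Va" "G1n_adj n Vc Va" "G1n_adj n Vc Vb" "G1n_adj n Ve Vd" "G1n_adj n Vd Vc"
  by (auto simp: G1n_verts_def G1n_adj_def G1n_edge0_def)

lemma cd_self[simp]: "cd L p p = 0"
  by (simp add: cd_def)

lemma cd0L: "n \<ge> 1 \<Longrightarrow> cd (n+2) 0 (n+1) = 1"
  by (simp add: cd_def)

lemma dist_C: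
  assumes n: "n \<ge> 1" and v: "v \<in> G1n_verts n"
  shows "gdist (G1n_verts n) (G1n_adj n) Vc v = hC n v"
proof (rule gdist_eq[OF VaV(3) v])
  show "hC n Vc = 0" by (simp add: hC_def)
  fix x y assume "x \<in> G1n_verts n" "y \<in> G1n_verts n" "G1n_adj n x y"
  show "hC n y \<le> hC n x + 1"
  proof (rule lip_generic[OF n _ _ _ \<open>G1n_adj n x y\<close>])
    show "\<And>q. q < n+2 \<Longrightarrow> hC n (vp n q) = 1 + gC (n+2) q" by (simp add: hC_vp)
    show "\<And>q q'. q < n+2 \<Longrightarrow> q' < n+2 \<Longrightarrow> cadj (n+2) q q' \<Longrightarrow> gC (n+2) q' \<le> gC (n+2) q + 1"
      using gC_lip by blast
    show "\<And>x y. (x, y) \<in> {(Va,Vc),(Vc,Va),(Va,Vd),(Vd,Va),(Vb,Vc),(Vc,Vb),(Vc,Vd),(Vd,Vc),(Vd,Ve),(Ve,Vd)}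
       \<Longrightarrow> hC n y \<le> hC n x + 1"
      by (auto simp: hC_def gC_def)
  qed
next
  fix v assume v: "v \<in> G1n_verts n" "v \<noteq> Vc"
  from v(1) show "\<exists>w\<in>G1n_verts n. G1n_adj n w v \<and> hC n w + 1 = hC n v"
  proof (cases rule: V_cases)
    case 1 then show ?thesis using v by simp
  next
    case 2 then show ?thesis using VaV ad by (intro bexI[of _ Vc]) (auto simp: hC_def)
  next
    case 3 then show ?thesis using VaV ad by (intro bexI[of _ Vd]) (auto simp: hC_def)
  next
    case (4 q)
    show ?thesis
    proof (cases "q = 0 \<or> q = n + 1")
      case True
      then have "v = Va \<or> v = Vb" using 4 vp0 vpL by auto
      then show ?thesis using VaV ad by (intro bexI[of _ Vc]) (auto simp: hC_def gC_def)
    next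
      case False
      show ?thesis unfolding \<open>v = vp n q\<close>
      proof (rule pred_generic[OF n _ \<open>q < n+2\<close>])
        show "\<And>q. q < n+2 \<Longrightarrow> hC n (vp n q) = 1 + gC (n+2) q" by (simp add: hC_vp)
        show "\<exists>q'<n+2. cadj (n+2) q' q \<and> gC (n+2) q' + 1 = gC (n+2) q"
          using gC_pred[of q "n+2"] False 4 by auto
      qed
    qed
  qed
qed

lemma dist_D:
  assumes n: "n \<ge> 1" and v: "v \<in> G1n_verts n"
  shows "gdist (G1n_verts n) (G1n_adj n) Vd v = hD n v"
proof (rule gdist_eq[OF VaV(4) v])
  show "hD n Vd = 0" by (simp add: hD_def)
  fix x y assume "x \<in> G1n_verts n" "y \<in> G1n_verts n" "G1n_adj n x y"
  show "hD n y \<le> hD n x + 1"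
  proof (rule lip_generic[OF n _ _ _ \<open>G1n_adj n x y\<close>])
    show "\<And>q. q < n+2 \<Longrightarrow> hD n (vp n q) = 1 + cd (n+2) 0 q" by (simp add: hD_vp)
    show "\<And>q q'. q < n+2 \<Longrightarrow> q' < n+2 \<Longrightarrow> cadj (n+2) q q' \<Longrightarrow> cd (n+2) 0 q' \<le> cd (n+2) 0 q + 1"
      by (rule cd_lip) auto
    show "\<And>x y. (x, y) \<in> {(Va,Vc),(Vc,Va),(Va,Vd),(Vd,Va),(Vb,Vc),(Vc,Vb),(Vc,Vd),(Vd,Vc),(Vd,Ve),(Ve,Vd)}
       \<Longrightarrow> hD n y \<le> hD n x + 1"
      using cd0L[OF n] by (auto simp: hD_def)
  qed
next
  fix v assume v: "v \<in> G1n_verts n" "v \<noteq> Vd"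
  from v(1) show "\<exists>w\<in>G1n_verts n. G1n_adj n w v \<and> hD n w + 1 = hD n v"
  proof (cases rule: V_cases)
    case 1 then show ?thesis using VaV ad by (intro bexI[of _ Vd]) (auto simp: hD_def)
  next
    case 2 then show ?thesis using v by simp
  next
    case 3 then show ?thesis using VaV ad by (intro bexI[of _ Vd]) (auto simp: hD_def)
  next
    case (4 q)
    show ?thesis
    proof (cases "q = 0")
      case True
      then have "v = Va" using 4 vp0 by auto
      then show ?thesis using VaV ad by (intro bexI[of _ Vd]) (auto simp: hD_def)
    next
      case False
      show ?thesis unfolding \<open>v = vp n q\<close>
      proof (rule pred_generic[OF n _ \<open>q < n+2\<close>])
        show "\<And>q. q < n+2 \<Longrightarrow> hD n (vp n q) = 1 + cd (n+2) 0 q" by (simp add: hD_vp)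
        show "\<exists>q'<n+2. cadj (n+2) q' q \<and> cd (n+2) 0 q' + 1 = cd (n+2) 0 q"
          using cd_pred[of 0 "n+2" q] False 4 by auto
      qed
    qed
  qed
qed

lemma dist_E:
  assumes n: "n \<ge> 1" and v: "v \<in> G1n_verts n"
  shows "gdist (G1n_verts n) (G1n_adj n) Ve v = hE n v"
proof (rule gdist_eq[OF VaV(5) v])
  show "hE n Ve = 0" by (simp add: hE_def)
  fix x y assume "x \<in> G1n_verts n" "y \<in> G1n_verts n" "G1n_adj n x y"
  show "hE n y \<le> hE n x + 1"
  proof (rule lip_generic[OF n _ _ _ \<open>G1n_adj n x y\<close>])
    show "\<And>q. q < n+2 \<Longrightarrow> hE n (vp n q) = 2 + cd (n+2) 0 q" by (simp add: hE_vp)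
    show "\<And>q q'. q < n+2 \<Longrightarrow> q' < n+2 \<Longrightarrow> cadj (n+2) q q' \<Longrightarrow> cd (n+2) 0 q' \<le> cd (n+2) 0 q + 1"
      by (rule cd_lip) auto
    show "\<And>x y. (x, y) \<in> {(Va,Vc),(Vc,Va),(Va,Vd),(Vd,Va),(Vb,Vc),(Vc,Vb),(Vc,Vd),(Vd,Vc),(Vd,Ve),(Ve,Vd)}
       \<Longrightarrow> hE n y \<le> hE n x + 1"
      using cd0L[OF n] by (auto simp: hE_def)
  qed
next
  fix v assume v: "v \<in> G1n_verts n" "v \<noteq> Ve"
  from v(1) show "\<exists>w\<in>G1n_verts n. G1n_adj n w v \<and> hE n w + 1 = hE n v"
  proof (cases rule: V_cases)
    case 1 then show ?thesis using VaV ad by (intro bexI[of _ Vd]) (auto simp: hE_def)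
  next
    case 2 then show ?thesis using VaV ad by (intro bexI[of _ Ve]) (auto simp: hE_def)
  next
    case 3 then show ?thesis using v by simp
  next
    case (4 q)
    show ?thesis
    proof (cases "q = 0")
      case True
      then have "v = Va" using 4 vp0 by auto
      then show ?thesis using VaV ad by (intro bexI[of _ Vd]) (auto simp: hE_def)
    next
      case False
      show ?thesis unfolding \<open>v = vp n q\<close>
      proof (rule pred_generic[OF n _ \<open>q < n+2\<close>])
        show "\<And>q. q < n+2 \<Longrightarrow> hE n (vp n q) = 2 + cd (n+2) 0 q" by (simp add: hE_vp)
        show "\<exists>q'<n+2. cadj (n+2) q' q \<and> cd (n+2) 0 q' + 1 = cd (n+2) 0 q"
          using cd_pred[of 0 "n+2" q] False 4 by auto
      qed
    qed
  qed
qed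




lemma sum_V:
  "(\<Sum>v\<in>G1n_verts n. f v) = f Vc + f Vd + f Ve + (\<Sum>q<n+2. f (vp n q))"
proof -
  have "(\<Sum>v\<in>G1n_verts n. f v) = (\<Sum>v\<in>{Vc, Vd, Ve}. f v) + (\<Sum>v\<in>vp n ` {..<n+2}. f v)"
    unfolding verts_eq by (rule sum.union_disjoint) (auto simp: vp_def)
  also have "(\<Sum>v\<in>vp n ` {..<n+2}. f v) = (\<Sum>q<n+2. f (vp n q))"
    by (rule sum.reindex[OF vp_inj, unfolded comp_def])
  finally show ?thesis by (simp add: add.assoc)
qed

lemma jq: assumes "q < (L::nat)" "p < L" shows "(q + L - p) mod L = (if p \<le> q then q - p else q + L - p)"
proof (cases "p \<le> q")
  case True
  have "q + L - p = (q - p) + L" using True by (simp add: Nat.add_diff_assoc2)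
  then have "(q + L - p) mod L = (q - p) mod L" by (metis mod_add_self2)
  then show ?thesis using True assms by simp
next
  case False
  then show ?thesis using assms by simp
qed
lemma im: assumes "b < (L::nat)" "p < L" shows "(b + p) mod L = (if b + p < L then b + p else b + p - L)"
proof (cases "b + p < L")
  case False
  then have "b + p = (b + p - L) + L" by arith
  then have "(b + p) mod L = (b + p - L) mod L" by (metis mod_add_self2)
  then show ?thesis using False assms by simp
qed simp

lemma cd0: "q < L \<Longrightarrow> cd L 0 q = min q (L - q)"
  by (simp add: cd_def)

lemma cd_shift: assumes "p < L" "q < L" shows "cd L p q = cd L 0 ((q + L - p) mod L)"
proof (cases "p \<le> q")
  case True
  then have "(q + L - p) mod L = q - p" using jq[OF assms(2,1)] by simp
  moreover have "q - p < L" using assms by simp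
  ultimately show ?thesis using True by (simp add: cd0 cd_ge)
next
  case False
  then have "(q + L - p) mod L = q + L - p" using jq[OF assms(2,1)] by simp
  moreover have "q + L - p < L" using assms False by simp
  ultimately show ?thesis using False by (simp add: cd0 cd_le min_def; arith)
qed

lemma ij: assumes "a < (L::nat)" "p < L" shows "((a + L - p) mod L + p) mod L = a"
proof (cases "p \<le> a")
  case True
  then have "(a + L - p) mod L = a - p" using jq[OF assms] by simp
  then have "(a + L - p) mod L + p = a" using True by simp
  then show ?thesis using assms by simp
next
  case False
  then have "(a + L - p) mod L = a + L - p" using jq[OF assms] by simp
  then have "(a + L - p) mod L + p = a + L" using False assms by simp
  then show ?thesis using assms by simp
qed

lemma ji: assumes "b < (L::nat)" "p < L" shows "((b + p) mod L + L - p) mod L = b"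
proof (cases "b + p < L")
  case True
  then have "(b + p) mod L = b + p" by simp
  then have "(b + p) mod L + L - p = b + L" by simp
  then show ?thesis using assms by simp
next
  case False
  then have "(b + p) mod L = b + p - L" using im[OF assms] by simp
  then have "(b + p) mod L + L - p = b" using False by simp
  then show ?thesis using assms by simp
qed

lemma sum_shift:
  assumes p: "p < L"
  shows "(\<Sum>q<L. cd L p q) = (\<Sum>q<L. cd L 0 q)"
proof (rule sum.reindex_bij_witness[where i = "\<lambda>r. (r + p) mod L" and j = "\<lambda>q. (q + L - p) mod L"])
  fix a assume a: "a \<in> {..<L}"
  then show "((a + L - p) mod L + p) mod L = a" using ij[OF _ p] by simp
  show "(a + L - p) mod L \<in> {..<L}" using p by simp
  show "cd L 0 ((a + L - p) mod L) = cd L p a" using cd_shift[OF p, of a] a by simp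
next
  fix b assume b: "b \<in> {..<L}"
  then show "((b + p) mod L + L - p) mod L = b" using ji[OF _ p] by simp
  show "(b + p) mod L \<in> {..<L}" using p by simp
qed

lemma sum_split: "(\<Sum>i<(a::nat)+b. f i) = (\<Sum>i<a. f i) + (\<Sum>j<b. f (a + j))"
  by (induction b) (simp_all add: add.assoc)

lemma gauss: "2 * (\<Sum>q<k. q) + k = k * (k::nat)"
  by (induction k) (simp_all add: algebra_simps)

lemma revsum1: "(\<Sum>j<k. k - j) = (\<Sum>j<k. j) + (k::nat)"
proof -
  have "(\<Sum>j<k. k - j) = (\<Sum>j<k. Suc (k - Suc j))"
    by (rule sum.cong) auto
  also have "\<dots> = (\<Sum>j<k. Suc j)" by (rule sum.nat_diff_reindex)
  also have "\<dots> = (\<Sum>j<k. j) + k" by (induction k) auto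
  finally show ?thesis .
qed

lemma revsum0: "(\<Sum>j<k. k - Suc j) = (\<Sum>j<k. j::nat)"
  using sum.nat_diff_reindex[of "\<lambda>j. j" k] by simp

lemma ivl_eq: "{..<6*m+3} = {..<(3*m+2)+(3*m+1::nat)}"
  by simp

lemma sumA: "(\<Sum>q<6*m+3. cd (6*m+3) 0 q) = 9*m*m + 9*m + 2"
proof -
  have "(\<Sum>q<6*m+3. cd (6*m+3) 0 q) = (\<Sum>q<(3*m+2)+(3*m+1). cd (6*m+3) 0 q)"
    by (simp only: ivl_eq)
  also have "\<dots> = (\<Sum>q<3*m+2. cd (6*m+3) 0 q) + (\<Sum>j<3*m+1. cd (6*m+3) 0 (3*m+2+j))"
    by (rule sum_split)
  also have "(\<Sum>q<3*m+2. cd (6*m+3) 0 q) = (\<Sum>q<3*m+2. q)"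
    by (rule sum.cong) (auto simp: cd0 min_def)
  also have "(\<Sum>j<3*m+1. cd (6*m+3) 0 (3*m+2+j)) = (\<Sum>j<3*m+1. (3*m+1) - j)"
    by (rule sum.cong) (auto simp: cd0 min_def)
  also have "\<dots> = (\<Sum>j<3*m+1. j) + (3*m+1)" by (rule revsum1)
  finally have e: "(\<Sum>q<6*m+3. cd (6*m+3) 0 q) = (\<Sum>q<3*m+2. q) + ((\<Sum>j<3*m+1. j) + (3*m+1))" .
  define S1 where "S1 = (\<Sum>q<3*m+2. q)"
  define S2 where "S2 = (\<Sum>q<3*m+1. q)"
  have g1: "2 * S1 + (3*m+2) = (3*m+2)*(3*m+2)" unfolding S1_def by (rule gauss)
  have g2: "2 * S2 + (3*m+1) = (3*m+1)*(3*m+1)" unfolding S2_def by (rule gauss)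
  have e': "(\<Sum>q<6*m+3. cd (6*m+3) 0 q) = S1 + (S2 + (3*m+1))" using e unfolding S1_def S2_def .
  show ?thesis using e' g1 g2 by (simp add: algebra_simps)
qed

lemma sumB: "(\<Sum>q<6*m+3. gC (6*m+3) q) = 9*m*m + 6*m + 1"
proof -
  have "(\<Sum>q<6*m+3. gC (6*m+3) q) = (\<Sum>q<(3*m+2)+(3*m+1). gC (6*m+3) q)"
    by (simp only: ivl_eq)
  also have "\<dots> = (\<Sum>q<3*m+2. gC (6*m+3) q) + (\<Sum>j<3*m+1. gC (6*m+3) (3*m+2+j))"
    by (rule sum_split)
  also have "(\<Sum>q<3*m+2. gC (6*m+3) q) = (\<Sum>q<3*m+2. q)"
    by (rule sum.cong) (auto simp: gC_def min_def)
  also have "(\<Sum>j<3*m+1. gC (6*m+3) (3*m+2+j)) = (\<Sum>j<3*m+1. (3*m+1) - Suc j)"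
    by (rule sum.cong) (auto simp: gC_def min_def)
  also have "\<dots> = (\<Sum>j<3*m+1. j)" by (rule revsum0)
  finally have e: "(\<Sum>q<6*m+3. gC (6*m+3) q) = (\<Sum>q<3*m+2. q) + (\<Sum>j<3*m+1. j)" .
  define S1 where "S1 = (\<Sum>q<3*m+2. q)"
  define S2 where "S2 = (\<Sum>q<3*m+1. q)"
  have g1: "2 * S1 + (3*m+2) = (3*m+2)*(3*m+2)" unfolding S1_def by (rule gauss)
  have g2: "2 * S2 + (3*m+1) = (3*m+1)*(3*m+1)" unfolding S2_def by (rule gauss)
  have e': "(\<Sum>q<6*m+3. gC (6*m+3) q) = S1 + S2" using e unfolding S1_def S2_def .
  show ?thesis using e' g1 g2 by (simp add: algebra_simps)
qed




lemma sum_cplus: "(\<Sum>q<N. (c::nat) + g q) = c * N + (\<Sum>q<N. g q)"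
  by (simp add: sum.distrib)


lemma tr_cyc:
  assumes n: "n \<ge> 1" and p: "p < n+2"
  shows "transmission (G1n_verts n) (G1n_adj n) (vp n p) =
    (1 + min (cd (n+2) p 0) (cd (n+2) p (n+1))) + (1 + cd (n+2) p 0) + (2 + cd (n+2) p 0)
    + (\<Sum>q<n+2. cd (n+2) p q)"
proof -
  have "transmission (G1n_verts n) (G1n_adj n) (vp n p) = (\<Sum>v\<in>G1n_verts n. hcyc n p v)"
    unfolding transmission_def by (rule sum.cong) (auto simp: dist_cyc[OF n p])
  also have "\<dots> = hcyc n p Vc + hcyc n p Vd + hcyc n p Ve + (\<Sum>q<n+2. hcyc n p (vp n q))"
    by (rule sum_V)
  also have "(\<Sum>q<n+2. hcyc n p (vp n q)) = (\<Sum>q<n+2. cd (n+2) p q)"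
    by (rule sum.cong) (auto simp: hcyc_vp)
  finally show ?thesis by (simp add: hcyc_def)
qed

lemma tr_C:
  assumes n: "n \<ge> 1"
  shows "transmission (G1n_verts n) (G1n_adj n) Vc = 3 + (n+2) + (\<Sum>q<n+2. gC (n+2) q)"
proof -
  have "transmission (G1n_verts n) (G1n_adj n) Vc = (\<Sum>v\<in>G1n_verts n. hC n v)"
    unfolding transmission_def by (rule sum.cong) (auto simp: dist_C[OF n])
  also have "\<dots> = hC n Vc + hC n Vd + hC n Ve + (\<Sum>q<n+2. hC n (vp n q))"
    by (rule sum_V)
  also have "(\<Sum>q<n+2. hC n (vp n q)) = (\<Sum>q<n+2. 1 + gC (n+2) q)"
    by (rule sum.cong) (auto simp: hC_vp)
  also have "\<dots> = 1 * (n+2) + (\<Sum>q<n+2. gC (n+2) q)" by (rule sum_cplus)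
  finally show ?thesis by (simp add: hC_def)
qed

lemma tr_D:
  assumes n: "n \<ge> 1"
  shows "transmission (G1n_verts n) (G1n_adj n) Vd = 2 + (n+2) + (\<Sum>q<n+2. cd (n+2) 0 q)"
proof -
  have "transmission (G1n_verts n) (G1n_adj n) Vd = (\<Sum>v\<in>G1n_verts n. hD n v)"
    unfolding transmission_def by (rule sum.cong) (auto simp: dist_D[OF n])
  also have "\<dots> = hD n Vc + hD n Vd + hD n Ve + (\<Sum>q<n+2. hD n (vp n q))"
    by (rule sum_V)
  also have "(\<Sum>q<n+2. hD n (vp n q)) = (\<Sum>q<n+2. 1 + cd (n+2) 0 q)"
    by (rule sum.cong) (auto simp: hD_vp)
  also have "\<dots> = 1 * (n+2) + (\<Sum>q<n+2. cd (n+2) 0 q)" by (rule sum_cplus)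
  finally show ?thesis by (simp add: hD_def)
qed

lemma tr_E:
  assumes n: "n \<ge> 1"
  shows "transmission (G1n_verts n) (G1n_adj n) Ve = 3 + 2*(n+2) + (\<Sum>q<n+2. cd (n+2) 0 q)"
proof -
  have "transmission (G1n_verts n) (G1n_adj n) Ve = (\<Sum>v\<in>G1n_verts n. hE n v)"
    unfolding transmission_def by (rule sum.cong) (auto simp: dist_E[OF n])
  also have "\<dots> = hE n Vc + hE n Vd + hE n Ve + (\<Sum>q<n+2. hE n (vp n q))"
    by (rule sum_V)
  also have "(\<Sum>q<n+2. hE n (vp n q)) = (\<Sum>q<n+2. 2 + cd (n+2) 0 q)"
    by (rule sum.cong) (auto simp: hE_vp)
  also have "\<dots> = 2 * (n+2) + (\<Sum>q<n+2. cd (n+2) 0 q)" by (rule sum_cplus)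
  finally show ?thesis by (simp add: hE_def)
qed

definition F :: "nat \<Rightarrow> nat \<Rightarrow> nat" where
  "F m p = (if p \<le> 3*m+1 then 3*p else 3*(6*m+3-p) - 1)"

lemma m3a: "3*(a::nat) \<noteq> 3*b + 1" by presburger
lemma m3b: "3*(a::nat) \<noteq> 3*b + 2" by presburger
lemma m3c: "3*(a::nat) + 1 \<noteq> 3*b + 2" by presburger

lemma F_alt: "p < 6*m+3 \<Longrightarrow> F m p = (if p \<le> 3*m+1 then 3*p else 3*(6*m+2-p) + 2)"
  unfolding F_def by auto

lemma F_inj: assumes "p < 6*m+3" "p' < 6*m+3" "F m p = F m p'" shows "p = p'"
proof -
  have e: "(if p \<le> 3*m+1 then 3*p else 3*(6*m+2-p) + 2) = (if p' \<le> 3*m+1 then 3*p' else 3*(6*m+2-p') + 2)"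
    using assms F_alt by metis
  show ?thesis
  proof (cases "p \<le> 3*m+1")
    case True
    show ?thesis
    proof (cases "p' \<le> 3*m+1")
      case True then show ?thesis using e \<open>p \<le> 3*m+1\<close> by simp
    next
      case False then show ?thesis using e \<open>p \<le> 3*m+1\<close> m3b[of p "6*m+2-p'"] by simp
    qed
  next
    case F1: False
    show ?thesis
    proof (cases "p' \<le> 3*m+1")
      case True then show ?thesis using e F1 m3b[of p' "6*m+2-p"] by simp
    next
      case False then show ?thesis using e F1 assms by simp
    qed
  qed
qed

lemma F_ne: assumes "p < 6*m+3" shows "F m p \<noteq> 3*m+1 \<and> F m p \<noteq> 6*m+1 \<and> F m p \<le> 9*m+3"
proof (cases "p \<le> 3*m+1")
  case True
  then have "F m p = 3*p" using F_alt[OF assms] by simp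
  then show ?thesis using True m3a[of p m] m3a[of p "2*m"] by simp
next
  case False
  then have "F m p = 3*(6*m+2-p) + 2" using F_alt[OF assms] by simp
  then show ?thesis using False m3c[of m "6*m+2-p"] m3c[of "2*m" "6*m+2-p"] assms by simp
qed

lemma F_eq:
  assumes p: "p < 6*m+3"
  shows "2 * cd (6*m+3) p 0 + min (cd (6*m+3) p 0) (cd (6*m+3) p (6*m+2)) = F m p"
proof -
  have c0: "cd (6*m+3) p 0 = min p (6*m+3-p)" by (simp add: cd_le)
  have c1: "cd (6*m+3) p (6*m+2) = min (6*m+2-p) (p+1)"
  proof -
    have "6*m+3 - (6*m+2-p) = p+1" using p by simp
    then show ?thesis using p by (simp add: cd_ge)
  qed
  show ?thesis
  proof (cases "p \<le> 3*m+1")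
    case True
    then have "cd (6*m+3) p 0 = p" using c0 by simp
    moreover have "min p (cd (6*m+3) p (6*m+2)) = p" using c1 True by simp
    ultimately show ?thesis using F_alt[OF p] True by simp
  next
    case False
    then have "cd (6*m+3) p 0 = 6*m+3-p" using c0 by simp
    moreover have "cd (6*m+3) p (6*m+2) = 6*m+2-p" using c1 False by simp
    ultimately show ?thesis using F_alt[OF p] False p by simp
  qed
qed

theorem proposition1:
  fixes m :: nat
  assumes "m \<ge> 1"
  shows "transmission_irregular (G1n_verts (6 * m + 1)) (G1n_adj (6 * m + 1))"
proof -
  define n where "n = 6 * m + 1"
  have n: "n \<ge> 1" unfolding n_def by simp
  have L2: "n + 2 = 6*m+3" and L1: "n + 1 = 6*m+2" unfolding n_def by simp_all
  define T where "T = transmission (G1n_verts n) (G1n_adj n)"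
  have TP: "T (vp n p) = 9*m*m + 9*m + 6 + F m p" if p: "p < n+2" for p
  proof -
    have p': "p < 6*m+3" using p L2 by simp
    have "T (vp n p) = (1 + min (cd (6*m+3) p 0) (cd (6*m+3) p (6*m+2))) + (1 + cd (6*m+3) p 0)
        + (2 + cd (6*m+3) p 0) + (\<Sum>q<6*m+3. cd (6*m+3) p q)"
      using tr_cyc[OF n p] unfolding T_def L2 L1 .
    also have "(\<Sum>q<6*m+3. cd (6*m+3) p q) = 9*m*m + 9*m + 2"
      using sum_shift[OF p'] sumA by simp
    finally show ?thesis using F_eq[OF p'] by simp
  qed
  have TC: "T Vc = 9*m*m + 12*m + 7"
    using tr_C[OF n] sumB unfolding T_def L2 by simp
  have TD: "T Vd = 9*m*m + 15*m + 7"
    using tr_D[OF n] sumA unfolding T_def L2 by simp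
  have TE: "T Ve = 9*m*m + 21*m + 11"
    using tr_E[OF n] sumA unfolding T_def L2 by simp
  define K where "K v = (case v of Vc \<Rightarrow> 3*m+1 | Vd \<Rightarrow> 6*m+1 | Ve \<Rightarrow> 12*m+5 | _ \<Rightarrow> F m (pos n v))" for v
  have TK: "T v = 9*m*m + 9*m + 6 + K v" if "v \<in> G1n_verts n" for v
    using that
  proof (cases rule: V_cases)
    case 1 then show ?thesis using TC by (simp add: K_def)
  next
    case 2 then show ?thesis using TD by (simp add: K_def)
  next
    case 3 then show ?thesis using TE by (simp add: K_def)
  next
    case (4 q)
    have "K v = F m q" unfolding 4(2) K_def using 4(1) by (simp add: vp_def)
    then show ?thesis using TP[OF 4(1)] 4(2) by simp
  qed
  have "inj_on T (G1n_verts n)"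
  proof (rule inj_onI)
    fix x y assume x: "x \<in> G1n_verts n" and y: "y \<in> G1n_verts n" and e: "T x = T y"
    then have k: "K x = K y" using TK[OF x] TK[OF y] by simp
    have Kvp: "K (vp n q) = F m q" if "q < n+2" for q unfolding K_def using that by (simp add: vp_def)
    have KF: "F m q \<noteq> 3*m+1 \<and> F m q \<noteq> 6*m+1 \<and> F m q \<noteq> 12*m+5" if "q < n+2" for q
      using F_ne[of q m] that L2 by auto
    show "x = y"
      using x
    proof (cases rule: V_cases)
      case 1 show ?thesis using y
        by (cases rule: V_cases) (use 1 k assms KF Kvp in \<open>auto simp: K_def\<close>)
    next
      case 2 show ?thesis using y
        by (cases rule: V_cases) (use 2 k assms KF Kvp in \<open>auto simp: K_def\<close>)
    next
      case 3 show ?thesis using y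
        by (cases rule: V_cases) (use 3 k assms KF Kvp in \<open>auto simp: K_def\<close>)
    next
      case (4 q) show ?thesis using y
      proof (cases rule: V_cases)
        case (4 q')
        then have "F m q = F m q'" using k Kvp \<open>x = vp n q\<close> \<open>q < n+2\<close> by simp
        then have "q = q'" using F_inj[of q m q'] \<open>q < n+2\<close> \<open>q' < n+2\<close> L2 by simp
        then show ?thesis using 4 \<open>x = vp n q\<close> by simp
      qed (use 4 k KF Kvp in \<open>auto simp: K_def\<close>)
    qed
  qed
  then show ?thesis unfolding transmission_irregular_def T_def n_def .
qed


end
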